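(* Let $d\ge 2$, $\xi>0$, and let $\sigma:\xi\mathbb{Z}^d\to\mathbb{R}$ be a generalized mass configuration. Let $R>0$ be such that $\operatorname{supp}\sigma\subset \hat B_R:=B(0,R)\cap\xi\mathbb{Z}^d$, and let $x_1,x_2,x_3,\ldots$ be an infinitely covering sequence of $\hat B_R$. For each $k\ge1$ let $\sigma_k:=T_{x_k}T_{x_{k-1}}\cdots T_{x_1}\sigma$ be the configuration obtained from $\sigma$ after toppling the points $x_1,\ldots,x_k$ in this order, and let $u_k$ be the corresponding $k$th odometer function. Then there exist a generalized mass configuration $\nu$ on $\xi\mathbb{Z}^d$ and a function $u:\xi\mathbb{Z}^d\to\mathbb{R}_+$ such that $\sigma_k(x)\to\nu(x)$ and $u_k(x)\nearrow u(x)$ for every $x\in\xi\mathbb{Z}^d$ as $k\to\infty$. Moreover, writing $\nu=\nu_+-\nu_-$ with $\nu_+=\max(\nu,0)$, $\nu_-=-\min(\nu,0)$, we have $\operatorname{supp}\nu_+\subset\partial\hat B_R$ and $\operatorname{supp}\nu_-\subset\operatorname{supp}\sigma_-$, so that $\nu\ge0$ on $\partial\hat B_R$ and $\nu\le 0$ on $\hat B_R$.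
   Context: A generalized mass configuration on $\xi\mathbb{Z}^d$ is a bounded function $\sigma:\xi\mathbb{Z}^d\to\mathbb{R}$ with finite support; $\sigma_+=\max(\sigma,0)$, $\sigma_-=-\min(\sigma,0)$, and $\operatorname{supp}\sigma=\operatorname{supp}\sigma_+\cup\operatorname{supp}\sigma_-$. For $y,y'\in\xi\mathbb{Z}^d$, $y'\sim y$ means $y'$ is one of the $2d$ lattice neighbours of $y$ at distance $\xi$. The discrete Laplacian is $\Delta f(y)=\frac{1}{2d\xi^2}\sum_{y'\sim y}(f(y')-f(y))$. For $x\in\xi\mathbb{Z}^d$ and a configuration $\eta$, the toppling of $\eta$ at $x$ is $T_x\eta(y):=\eta(y)+\eta_+(x)\,\xi^2\,\Delta\delta_x(y)$, where $\delta_x$ is the discrete delta function at $x$; i.e. if $\eta(x)>0$ the mass $\eta(x)$ is removed from $x$ and $\eta(x)/(2d)$ is added to each neighbour of $x$, and otherwise nothing changes. An infinitely covering sequence of a set $S\subset\xi\mathbb{Z}^d$ is a sequence of points of $S$ in which every point of $S$ appears infinitely often. The $k$th odometer function is $u_k(x):=\xi^2\sum_{1\le j\le k,\ x_j=x}(\sigma_{j-1})_+(x)$ (with $\sigma_0=\sigma$), i.e. $\xi^2$ times the total mass emitted from $x$ during the first $k$ topplings. For $S\subset\xi\mathbb{Z}^d$, the outer boundary is $\partial S:=\{y\notin S:\exists\, y'\in S \text{ with } y\sim y'\}$. $B(a,r)$ denotes the open Euclidean ball in $\mathbb{R}^d$. *)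

theory Defs
  imports "HOL-Analysis.Analysis"
begin

text \<open>Points of the lattice xi Z^d are represented by their integer coordinate
  vectors z :: int^'d; the actual point is xi *R z (see lattice_point).
  The dimension is d = CARD('d).\<close>

definition lattice_point :: "real \<Rightarrow> int^'d \<Rightarrow> real^'d" where
  "lattice_point xi z = xi *\<^sub>R (\<chi> i. real_of_int (z $ i))"

definition nbrs :: "int^'d \<Rightarrow> (int^'d) set" where
  "nbrs z = {z + axis i 1 | i. True} \<union> {z - axis i 1 | i. True}"

definition lattice_nbr :: "int^'d \<Rightarrow> int^'d \<Rightarrow> bool" where
  "lattice_nbr y' y \<longleftrightarrow> y' \<in> nbrs y"

definition support :: "(int^'d \<Rightarrow> real) \<Rightarrow> (int^'d) set" where
  "support f = {z. f z \<noteq> 0}"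

definition pos_part :: "(int^'d \<Rightarrow> real) \<Rightarrow> int^'d \<Rightarrow> real" where
  "pos_part f z = max (f z) 0"

definition neg_part :: "(int^'d \<Rightarrow> real) \<Rightarrow> int^'d \<Rightarrow> real" where
  "neg_part f z = - min (f z) 0"

definition gen_mass_config :: "(int^'d \<Rightarrow> real) \<Rightarrow> bool" where
  "gen_mass_config f \<longleftrightarrow> bounded (range f) \<and> finite (support f)"

definition dlap :: "real \<Rightarrow> (int^'d \<Rightarrow> real) \<Rightarrow> int^'d \<Rightarrow> real" where
  "dlap xi f y = (1 / (2 * real CARD('d) * xi^2)) * (\<Sum>y'\<in>nbrs y. (f y' - f y))"

definition ddelta :: "int^'d \<Rightarrow> int^'d \<Rightarrow> real" where
  "ddelta x y = (if y = x then 1 else 0)"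

definition topple :: "real \<Rightarrow> int^'d \<Rightarrow> (int^'d \<Rightarrow> real) \<Rightarrow> int^'d \<Rightarrow> real" where
  "topple xi x \<eta> y = \<eta> y + pos_part \<eta> x * xi^2 * dlap xi (ddelta x) y"

text \<open>sigma_k = T_{x_k} ... T_{x_1} sigma; the sequence is x 1, x 2, ... (x 0 unused).\<close>
fun topple_seq :: "real \<Rightarrow> (nat \<Rightarrow> int^'d) \<Rightarrow> (int^'d \<Rightarrow> real) \<Rightarrow> nat \<Rightarrow> int^'d \<Rightarrow> real" where
  "topple_seq xi xs \<sigma> 0 = \<sigma>"
| "topple_seq xi xs \<sigma> (Suc k) = topple xi (xs (Suc k)) (topple_seq xi xs \<sigma> k)"

definition odometer :: "real \<Rightarrow> (nat \<Rightarrow> int^'d) \<Rightarrow> (int^'d \<Rightarrow> real) \<Rightarrow> nat \<Rightarrow> int^'d \<Rightarrow> real" where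
  "odometer xi xs \<sigma> k x = xi^2 * (\<Sum>j\<in>{j. 1 \<le> j \<and> j \<le> k \<and> xs j = x}.
        pos_part (topple_seq xi xs \<sigma> (j - 1)) x)"

definition lattice_ball :: "real \<Rightarrow> real \<Rightarrow> (int^'d) set" where
  "lattice_ball xi R = {z. lattice_point xi z \<in> ball 0 R}"

definition outer_boundary :: "(int^'d) set \<Rightarrow> (int^'d) set" where
  "outer_boundary S = {y. y \<notin> S \<and> (\<exists>y'\<in>S. lattice_nbr y y')}"

definition infinitely_covering :: "(nat \<Rightarrow> 'a) \<Rightarrow> 'a set \<Rightarrow> bool" where
  "infinitely_covering xs S \<longleftrightarrow> (\<forall>k\<ge>1. xs k \<in> S) \<and> (\<forall>y\<in>S. infinite {k. k \<ge> 1 \<and> xs k = y})"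

end

theory Submission imports Defs begin

lemma axis_comp: "axis i (1::int) $ j = (if j = i then 1 else 0)"
  by (simp add: axis_def)

lemma nbrs_eq: "nbrs y = range (\<lambda>i. y + axis i 1) \<union> range (\<lambda>i. y - axis i 1)"
  unfolding nbrs_def by auto

lemma finite_nbrs: "finite (nbrs (y::int^'d))"
  unfolding nbrs_eq by auto

lemma nbrs_sum: "(\<Sum>y'\<in>nbrs y. g y') = (\<Sum>i\<in>UNIV. g (y + axis i 1) + g (y - axis i 1))"
proof -
  have disj: "range (\<lambda>i. y + axis i 1) \<inter> range (\<lambda>i. y - axis i (1::int)) = {}"
  proof (rule ccontr)
    assume "\<not> ?thesis"
    then obtain i j where "y + axis i 1 = y - axis j (1::int)" by auto
    then have "(y + axis i 1) $ i = (y - axis j (1::int)) $ i" by simp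
    then show False by (auto simp: axis_comp split: if_splits)
  qed
  have inj1: "inj (\<lambda>i. y + axis i (1::int))" by (auto simp: inj_def axis_eq_axis)
  have inj2: "inj (\<lambda>i. y - axis i (1::int))" by (auto simp: inj_def axis_eq_axis)
  have "(\<Sum>y'\<in>nbrs y. g y') = (\<Sum>y'\<in>range (\<lambda>i. y + axis i 1). g y') + (\<Sum>y'\<in>range (\<lambda>i. y - axis i 1). g y')"
    unfolding nbrs_eq by (rule sum.union_disjoint) (use disj in auto)
  also have "\<dots> = (\<Sum>i\<in>UNIV. g (y + axis i 1)) + (\<Sum>i\<in>UNIV. g (y - axis i 1))"
    by (simp add: sum.reindex[OF inj1] sum.reindex[OF inj2])
  finally show ?thesis by (simp add: sum.distrib)
qed

lemma card_nbrs: "card (nbrs (y::int^'d)) = 2 * CARD('d)"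
proof -
  have "real (card (nbrs y)) = (\<Sum>y'\<in>nbrs y. 1)" by simp
  also have "\<dots> = 2 * real CARD('d)" by (subst nbrs_sum) simp
  finally show ?thesis by linarith
qed

lemma not_self_nbr: "x \<notin> nbrs (x::int^'d)"
proof
  assume "x \<in> nbrs x"
  then obtain i where "x = x + axis i 1 \<or> x = x - axis i (1::int)" unfolding nbrs_def by auto
  then have "x $ i = (x + axis i 1) $ i \<or> x $ i = (x - axis i (1::int)) $ i" by auto
  then show False by simp
qed

lemma nbr_sym: "x \<in> nbrs y \<longleftrightarrow> y \<in> nbrs (x::int^'d)"
  unfolding nbrs_def by (auto simp: algebra_simps)

definition wt :: "int^'d \<Rightarrow> int^'d \<Rightarrow> real" where
  "wt x y = (if y = x then -1 else if y \<in> nbrs x then 1 / (2 * real CARD('d)) else 0)"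

lemma topple_eq: fixes x :: "int^'d" assumes "xi \<noteq> 0"
  shows "topple xi x \<eta> y = \<eta> y + pos_part \<eta> x * wt x y"
proof -
  have s: "(\<Sum>y'\<in>nbrs y. ddelta x y') = (if x \<in> nbrs y then 1 else 0)"
    unfolding ddelta_def by (simp add: sum.delta' finite_nbrs)
  have "(\<Sum>y'\<in>nbrs y. ddelta x y' - ddelta x y) = (\<Sum>y'\<in>nbrs y. ddelta x y') - real (card (nbrs y)) * ddelta x y"
    by (simp add: sum_subtractf)
  also have "\<dots> = (if x \<in> nbrs y then 1 else 0) - 2 * real CARD('d) * ddelta x y"
    by (simp add: s card_nbrs)
  finally have e: "(\<Sum>y'\<in>nbrs y. ddelta x y' - ddelta x y) = (if x \<in> nbrs y then 1 else 0) - 2 * real CARD('d) * ddelta x y" .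
  have "xi^2 * dlap xi (ddelta x) y = wt x y"
    unfolding dlap_def e wt_def using assms not_self_nbr[of x]
    by (auto simp: ddelta_def nbr_sym field_simps)
  then show ?thesis unfolding topple_def by (metis mult.assoc)
qed

definition qf :: "int^'d \<Rightarrow> real" where
  "qf y = (\<Sum>i\<in>UNIV. (real_of_int (y $ i))^2)"

lemma qf_pm: "qf (x + axis i 1) + qf (x - axis i 1) = 2 * qf x + 2"
proof -
  have "qf (x + axis i 1) + qf (x - axis i 1)
      = (\<Sum>j\<in>UNIV. 2 * (real_of_int (x $ j))^2 + (if j = i then 2 else 0))"
    unfolding qf_def sum.distrib[symmetric]
    by (rule sum.cong) (auto simp: axis_comp power2_eq_square algebra_simps)
  also have "\<dots> = 2 * qf x + 2"
    by (simp add: sum.distrib qf_def sum_distrib_left sum.delta)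
  finally show ?thesis .
qed

lemma wt_sum_ins: fixes x :: "int^'d" shows "(\<Sum>y\<in>insert x (nbrs x). wt x y) = 0"
proof -
  have "(\<Sum>y\<in>insert x (nbrs x). wt x y) = wt x x + (\<Sum>y\<in>nbrs x. wt x y)"
    by (simp add: finite_nbrs not_self_nbr)
  also have "(\<Sum>y\<in>nbrs x. wt x y) = (\<Sum>y\<in>nbrs x. 1 / (2 * real CARD('d)))"
    by (rule sum.cong) (auto simp: wt_def not_self_nbr)
  also have "\<dots> = 1" by (simp add: card_nbrs)
  finally show ?thesis by (simp add: wt_def)
qed

lemma wt_moment_ins: fixes x :: "int^'d" shows "(\<Sum>y\<in>insert x (nbrs x). qf y * wt x y) = 1"
proof -
  have "(\<Sum>y\<in>insert x (nbrs x). qf y * wt x y) = qf x * wt x x + (\<Sum>y\<in>nbrs x. qf y * wt x y)"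
    by (simp add: finite_nbrs not_self_nbr)
  also have "(\<Sum>y\<in>nbrs x. qf y * wt x y) = (\<Sum>y\<in>nbrs x. qf y) / (2 * real CARD('d))"
    by (simp add: sum_divide_distrib, rule sum.cong) (auto simp: wt_def not_self_nbr)
  also have "(\<Sum>y\<in>nbrs x. qf y) = (\<Sum>i\<in>(UNIV::'d set). 2 * qf x + 2)"
    by (simp add: nbrs_sum qf_pm)
  finally show ?thesis by (simp add: wt_def field_simps)
qed

lemma wt_zero: "y \<notin> insert x (nbrs x) \<Longrightarrow> wt x y = 0"
  by (auto simp: wt_def)

lemma wt_sum: assumes "finite G" "insert x (nbrs x) \<subseteq> G"
  shows "(\<Sum>y\<in>G. wt x y) = 0"
proof -
  have "(\<Sum>y\<in>G. wt x y) = (\<Sum>y\<in>insert x (nbrs x). wt x y)"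
    by (rule sum.mono_neutral_right) (use assms wt_zero in auto)
  then show ?thesis using wt_sum_ins by simp
qed

lemma wt_moment: assumes "finite G" "insert x (nbrs x) \<subseteq> G"
  shows "(\<Sum>y\<in>G. qf y * wt x y) = 1"
proof -
  have "(\<Sum>y\<in>G. qf y * wt x y) = (\<Sum>y\<in>insert x (nbrs x). qf y * wt x y)"
    by (rule sum.mono_neutral_right) (use assms wt_zero in auto)
  then show ?thesis using wt_moment_ins by simp
qed

lemma card_pos: "0 < CARD('d::finite)"
  by (simp add: finite_UNIV_card_ge_0)

lemma wt_bound: fixes x :: "int^'d" shows "\<bar>wt x y\<bar> \<le> 1"
proof -
  have c: "real CARD('d) \<ge> 1" using card_pos[where 'd='d] by linarith
  have "1 \<le> 2 * real CARD('d)" using c by linarith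
  then have "1 / (2 * real CARD('d)) \<le> 1" by (subst divide_le_eq_1_pos) auto
  moreover have "0 \<le> 1 / (2 * real CARD('d))" by simp
  ultimately show ?thesis unfolding wt_def by auto
qed

lemma topple_at: "xi \<noteq> 0 \<Longrightarrow> topple xi x \<eta> x = min (\<eta> x) 0"
  by (simp add: topple_eq wt_def pos_part_def)

lemma topple_ge: "xi \<noteq> 0 \<Longrightarrow> y \<noteq> x \<Longrightarrow> topple xi x \<eta> y \<ge> \<eta> y"
  by (simp add: topple_eq wt_def pos_part_def)

lemma finite_ball: assumes "xi > 0" shows "finite (lattice_ball xi R :: (int^'d) set)"
proof -
  define N where "N = \<lceil>R / xi\<rceil>"
  have "lattice_ball xi R \<subseteq> vec_lambda ` (PiE (UNIV::'d set) (\<lambda>_. {-N..N}))"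
  proof
    fix z :: "int^'d" assume "z \<in> lattice_ball xi R"
    then have n: "norm (lattice_point xi z) < R" by (simp add: lattice_ball_def)
    have "\<forall>i. z $ i \<in> {-N..N}"
    proof
      fix i
      have "xi * \<bar>real_of_int (z $ i)\<bar> \<le> xi * norm (\<chi> i. real_of_int (z $ i))"
        using component_le_norm_cart[of "\<chi> i. real_of_int (z $ i)" i] assms by simp
      also have "\<dots> < R" using n assms by (simp add: lattice_point_def)
      finally have "xi * \<bar>real_of_int (z $ i)\<bar> < R" .
      then have "\<bar>real_of_int (z $ i)\<bar> < R / xi" using assms by (simp add: field_simps)
      then have "\<bar>real_of_int (z $ i)\<bar> \<le> real_of_int N" unfolding N_def
        by (meson le_of_int_ceiling less_le_trans order.strict_implies_order)
      then show "z $ i \<in> {-N..N}" by auto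
    qed
    then show "z \<in> vec_lambda ` (PiE UNIV (\<lambda>_. {-N..N}))"
      by (intro image_eqI[of _ _ "\<lambda>i. z $ i"]) auto
  qed
  moreover have "finite (vec_lambda ` (PiE (UNIV::'d set) (\<lambda>_. {-N..N})))"
    by (intro finite_imageI finite_PiE) auto
  ultimately show ?thesis by (rule finite_subset)
qed

theorem proposition3p1:
  fixes xi R :: real and \<sigma> :: "int^'d \<Rightarrow> real" and xs :: "nat \<Rightarrow> int^'d"
  assumes "CARD('d) \<ge> 2"
    and "xi > 0"
    and "gen_mass_config \<sigma>"
    and "R > 0"
    and "support \<sigma> \<subseteq> lattice_ball xi R"
    and "infinitely_covering xs (lattice_ball xi R)"
  shows "\<exists>\<nu> u. gen_mass_config \<nu> \<and> (\<forall>x. u x \<ge> 0)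
     \<and> (\<forall>x. (\<lambda>k. topple_seq xi xs \<sigma> k x) \<longlonglongrightarrow> \<nu> x)
     \<and> (\<forall>x. incseq (\<lambda>k. odometer xi xs \<sigma> k x) \<and> (\<lambda>k. odometer xi xs \<sigma> k x) \<longlonglongrightarrow> u x)
     \<and> support (pos_part \<nu>) \<subseteq> outer_boundary (lattice_ball xi R)
     \<and> support (neg_part \<nu>) \<subseteq> support (neg_part \<sigma>)"
proof -
  define B where "B = (lattice_ball xi R :: (int^'d) set)"
  define G where "G = B \<union> (\<Union>x\<in>B. nbrs x)"
  define s where "s = topple_seq xi xs \<sigma>"
  define p where "p j = pos_part (s j) (xs (Suc j))" for j
  have xi0: "xi \<noteq> 0" using assms(2) by simp
  have finB: "finite B" unfolding B_def using assms(2) by (rule finite_ball)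
  have finG: "finite G" unfolding G_def using finB by (auto simp: finite_nbrs)
  have xsB: "xs (Suc k) \<in> B" for k using assms(6) unfolding infinitely_covering_def B_def by auto
  have subG: "insert (xs (Suc k)) (nbrs (xs (Suc k))) \<subseteq> G" for k
    using xsB[of k] unfolding G_def by auto
  have BG: "B \<subseteq> G" unfolding G_def by auto
  have sS: "s (Suc k) y = s k y + p k * wt (xs (Suc k)) y" for k y
    unfolding s_def p_def by (simp add: topple_eq[OF xi0])
  have p0: "p j \<ge> 0" for j unfolding p_def pos_part_def by simp
  have sig0: "\<sigma> y = 0" if "y \<notin> G" for y
    using assms(5) that BG unfolding B_def support_def by auto
  have F2: "s k y = 0" if "y \<notin> G" for k y
  proof (induction k)
    case 0 then show ?case using sig0[OF that] by (simp add: s_def)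
  next
    case (Suc k)
    have "wt (xs (Suc k)) y = 0" using subG[of k] that by (intro wt_zero) auto
    then show ?case using Suc by (simp add: sS)
  qed
  define m where "m y = min (\<sigma> y) 0" for y
  have F3: "s k y \<ge> m y" for k y
  proof (induction k)
    case 0 then show ?case by (simp add: s_def m_def)
  next
    case (Suc k)
    show ?case
    proof (cases "y = xs (Suc k)")
      case True
      then have "s (Suc k) y = min (s k y) 0" unfolding s_def by (simp add: topple_at[OF xi0])
      then show ?thesis using Suc by (simp add: m_def)
    next
      case False
      then have "s (Suc k) y \<ge> s k y" unfolding s_def by (simp add: topple_ge[OF xi0])
      then show ?thesis using Suc by simp
    qed
  qed
  have F4: "(\<Sum>y\<in>G. s k y) = (\<Sum>y\<in>G. \<sigma> y)" for k
  proof (induction k)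
    case 0 then show ?case by (simp add: s_def)
  next
    case (Suc k)
    have "(\<Sum>y\<in>G. s (Suc k) y) = (\<Sum>y\<in>G. s k y) + p k * (\<Sum>y\<in>G. wt (xs (Suc k)) y)"
      by (simp add: sS sum.distrib sum_distrib_left)
    then show ?case using Suc wt_sum[OF finG subG] by simp
  qed
  have F5: "(\<Sum>y\<in>G. qf y * s k y) = (\<Sum>y\<in>G. qf y * \<sigma> y) + (\<Sum>j<k. p j)" for k
  proof (induction k)
    case 0 then show ?case by (simp add: s_def)
  next
    case (Suc k)
    have "(\<Sum>y\<in>G. qf y * s (Suc k) y) = (\<Sum>y\<in>G. qf y * s k y) + p k * (\<Sum>y\<in>G. qf y * wt (xs (Suc k)) y)"
      by (simp add: sS sum.distrib sum_distrib_left algebra_simps)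
    then show ?case using Suc wt_moment[OF finG subG] by simp
  qed
  define Qs where "Qs = (\<Sum>y\<in>G. qf y)"
  have qf0: "qf y \<ge> 0" for y unfolding qf_def by (simp add: sum_nonneg)
  have qfle: "qf y \<le> Qs" if "y \<in> G" for y
    unfolding Qs_def using finG that qf0 by (intro member_le_sum) auto
  define C where "C = Qs * ((\<Sum>y\<in>G. \<sigma> y) - (\<Sum>y\<in>G. m y)) + (\<Sum>y\<in>G. qf y * m y) - (\<Sum>y\<in>G. qf y * \<sigma> y)"
  have F6: "(\<Sum>j<k. p j) \<le> C" for k
  proof -
    have a: "(\<Sum>y\<in>G. qf y * s k y) = (\<Sum>y\<in>G. qf y * (s k y - m y)) + (\<Sum>y\<in>G. qf y * m y)"
      by (simp add: sum.distrib[symmetric] algebra_simps)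
    have b: "(\<Sum>y\<in>G. qf y * (s k y - m y)) \<le> (\<Sum>y\<in>G. Qs * (s k y - m y))"
      using F3 qfle by (intro sum_mono mult_right_mono) auto
    have c: "(\<Sum>y\<in>G. Qs * (s k y - m y)) = Qs * ((\<Sum>y\<in>G. \<sigma> y) - (\<Sum>y\<in>G. m y))"
      using F4[of k] by (simp add: sum_distrib_left[symmetric] sum_subtractf)
    show ?thesis using a b c F5[of k] F4[of k] unfolding C_def by linarith
  qed
  have sump: "summable p" using p0 F6 by (intro summableI_nonneg_bounded) auto
  have sform: "s k y = \<sigma> y + (\<Sum>j<k. p j * wt (xs (Suc j)) y)" for k y
  proof (induction k)
    case 0 then show ?case by (simp add: s_def)
  next
    case (Suc k) then show ?case by (simp add: sS)
  qed
  define \<nu> where "\<nu> y = \<sigma> y + (\<Sum>j. p j * wt (xs (Suc j)) y)" for y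
  have conv: "(\<lambda>k. s k y) \<longlonglongrightarrow> \<nu> y" for y
  proof -
    have "summable (\<lambda>j. p j * wt (xs (Suc j)) y)"
    proof (rule summable_comparison_test'[OF sump])
      fix j :: nat
      show "norm (p j * wt (xs (Suc j)) y) \<le> p j"
        using p0[of j] wt_bound[of "xs (Suc j)" y] by (simp add: abs_mult mult_left_le)
    qed
    then have "(\<lambda>k. \<Sum>j<k. p j * wt (xs (Suc j)) y) \<longlonglongrightarrow> (\<Sum>j. p j * wt (xs (Suc j)) y)"
      by (rule summable_LIMSEQ)
    then show ?thesis unfolding sform \<nu>_def by (intro tendsto_add) auto
  qed
  have nuG: "\<nu> y = 0" if "y \<notin> G" for y
  proof -
    have "(\<lambda>k. s k y) \<longlonglongrightarrow> 0" using F2[OF that] by simp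
    then show ?thesis using LIMSEQ_unique[OF conv[of y]] by blast
  qed
  have supp\<nu>: "support \<nu> \<subseteq> G" using nuG unfolding support_def by auto
  have gmc: "gen_mass_config \<nu>"
  proof -
    have "range \<nu> \<subseteq> insert 0 (\<nu> ` G)" using nuG by auto
    then have "finite (range \<nu>)" using finG by (meson finite_imageI finite_insert finite_subset)
    then show ?thesis unfolding gen_mass_config_def
      using finite_subset[OF supp\<nu> finG] by (simp add: finite_imp_bounded)
  qed
  define c where "c x j = (if xs (Suc j) = x then p j else 0)" for x j
  have odo: "odometer xi xs \<sigma> k x = xi^2 * (\<Sum>j<k. c x j)" for k x
  proof -
    have e: "{j. 1 \<le> j \<and> j \<le> k \<and> xs j = x} = Suc ` {j \<in> {..<k}. xs (Suc j) = x}"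
    proof (intro equalityI subsetI)
      fix j assume "j \<in> {j. 1 \<le> j \<and> j \<le> k \<and> xs j = x}"
      then have j: "1 \<le> j" "j \<le> k" "xs j = x" by auto
      then have "j = Suc (j - 1)" "j - 1 \<in> {j \<in> {..<k}. xs (Suc j) = x}" by auto
      then show "j \<in> Suc ` {j \<in> {..<k}. xs (Suc j) = x}" by (metis image_eqI)
    qed auto
    have "(\<Sum>j\<in>{j. 1 \<le> j \<and> j \<le> k \<and> xs j = x}. pos_part (topple_seq xi xs \<sigma> (j - 1)) x)
        = (\<Sum>j\<in>{j \<in> {..<k}. xs (Suc j) = x}. pos_part (s j) x)"
      unfolding e by (subst sum.reindex) (auto simp: s_def)
    also have "\<dots> = (\<Sum>j\<in>{j \<in> {..<k}. xs (Suc j) = x}. c x j)"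
      by (rule sum.cong) (auto simp: c_def p_def)
    also have "\<dots> = (\<Sum>j<k. c x j)"
      by (subst sum.inter_filter) (auto simp: c_def intro!: sum.cong)
    finally show ?thesis unfolding odometer_def by simp
  qed
  have c0: "c x j \<ge> 0" for x j using p0 by (simp add: c_def)
  have sumc: "summable (c x)" for x
    by (rule summable_comparison_test'[OF sump]) (auto simp: c_def p0)
  define u where "u x = xi^2 * suminf (c x)" for x
  have odconv: "(\<lambda>k. odometer xi xs \<sigma> k x) \<longlonglongrightarrow> u x" for x
    unfolding odo u_def by (intro tendsto_mult tendsto_const summable_LIMSEQ sumc)
  have odinc: "incseq (\<lambda>k. odometer xi xs \<sigma> k x)" for x
    unfolding odo by (intro incseq_SucI) (simp add: c0 mult_left_mono)
  have u0: "u x \<ge> 0" for x unfolding u_def using c0 sumc by (simp add: suminf_nonneg)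
  have pos: "support (pos_part \<nu>) \<subseteq> outer_boundary B"
  proof
    fix y assume "y \<in> support (pos_part \<nu>)"
    then have yp: "\<nu> y > 0" by (simp add: support_def pos_part_def max_def split: if_splits)
    then have yG: "y \<in> G" using nuG by force
    have yB: "y \<notin> B"
    proof
      assume "y \<in> B"
      then have inf: "infinite {k. k \<ge> 1 \<and> xs k = y}"
        using assms(6) unfolding infinitely_covering_def B_def by auto
      have "\<forall>\<^sub>F k in sequentially. s k y > 0"
        using conv[of y] yp by (rule order_tendstoD)
      then obtain N where N: "\<And>k. k \<ge> N \<Longrightarrow> s k y > 0" by (auto simp: eventually_sequentially)
      obtain k where k: "k \<ge> N + 1" "k \<in> {k. k \<ge> 1 \<and> xs k = y}"
        using inf unfolding infinite_nat_iff_unbounded_le by blast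
      then obtain k' where k': "k = Suc k'" by (cases k) auto
      have "s k y = min (s k' y) 0" using k k' unfolding s_def by (simp add: topple_at[OF xi0])
      then have "s k y \<le> 0" by simp
      with N[of k] k show False by simp
    qed
    then show "y \<in> outer_boundary B" using yG unfolding G_def outer_boundary_def lattice_nbr_def by auto
  qed
  have neg: "support (neg_part \<nu>) \<subseteq> support (neg_part \<sigma>)"
  proof
    fix y assume "y \<in> support (neg_part \<nu>)"
    then have yn: "\<nu> y < 0" by (simp add: support_def neg_part_def min_def split: if_splits)
    have "\<sigma> y < 0"
    proof (rule ccontr)
      assume "\<not> \<sigma> y < 0"
      then have "\<And>k. s k y \<ge> 0" using F3 unfolding m_def by (metis min.absorb2 not_less)
      then have "\<nu> y \<ge> 0" using conv[of y] by (intro LIMSEQ_le_const) auto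
      with yn show False by simp
    qed
    then show "y \<in> support (neg_part \<sigma>)" by (simp add: support_def neg_part_def)
  qed
  show ?thesis
    unfolding s_def[symmetric] B_def[symmetric]
    by (intro exI[of _ \<nu>] exI[of _ u] conjI allI) (use gmc u0 conv odconv odinc pos neg in auto)
qed

end
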